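(* For all $s>0$ and $K\in\mathbb{N}$, the function $f^{s,K}_{square}(t):=\frac{2s}{K}\sum_{k=1}^K\big([t-\tfrac{sk}{K}]_++[-t-\tfrac{sk}{K}]_+\big)$ satisfies $$\sup_{t\in[-s,s]}|f^{s,K}_{square}(t)-t^2|\le s^2\Big(\frac1K+\frac1{K^2}\Big).$$
   Context: $[t]_+=\max(t,0)$. *)

theory Defs
  imports "HOL-Analysis.Analysis"
begin

definition pos_part :: "real \<Rightarrow> real" where
  "pos_part t = max t 0"

definition f_square :: "real \<Rightarrow> nat \<Rightarrow> real \<Rightarrow> real" where
  "f_square s K t = (2 * s / real K) *
     (\<Sum>k=1..K. pos_part (t - s * real k / real K) + pos_part (- t - s * real k / real K))"

end

theory Submission
  imports Defs
begin

lemma gsum: "(\<Sum>k=1..(j::nat). t - real k * h) = real j * t - h * real j * (real j + 1) / 2"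
proof (induction j)
  case 0 then show ?case by simp
next
  case (Suc j)
  have "(\<Sum>k=1..Suc j. t - real k * h) = (\<Sum>k=1..j. t - real k * h) + (t - real (Suc j) * h)"
    by (simp add: sum.cl_ivl_Suc)
  also have "\<dots> = real j * t - h * real j * (real j + 1) / 2 + (t - real (Suc j) * h)"
    using Suc.IH by simp
  finally show ?case by (simp add: field_simps)
qed

lemma even_f: "f_square s K (-t) = f_square s K t"
  unfolding f_square_def by (simp add: add.commute)

lemma pos_case:
  fixes s t :: real and K :: nat
  assumes s: "s > 0" and K: "K \<ge> 1" and t: "0 \<le> t" "t \<le> s"
  shows "\<bar>f_square s K t - t ^ 2\<bar> \<le> s ^ 2 * (1 / real K + 1 / (real K) ^ 2)"
proof -
  define h where "h = s / real K"
  have hpos: "h > 0" using s K by (simp add: h_def)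
  have sK: "s = real K * h" using K by (simp add: h_def)
  define j where "j = min (K - 1) (nat \<lfloor>t / h\<rfloor>)"
  have jK: "j \<le> K - 1" by (simp add: j_def)
  have jle: "real j * h \<le> t"
  proof -
    have "0 \<le> t / h" using t hpos by simp
    then have "real (nat \<lfloor>t / h\<rfloor>) = of_int \<lfloor>t / h\<rfloor>" by simp
    then have "real (nat \<lfloor>t / h\<rfloor>) \<le> t / h" by (simp add: of_int_floor_le)
    then have "real (nat \<lfloor>t / h\<rfloor>) * h \<le> t" using hpos by (simp add: pos_le_divide_eq)
    moreover have "real j \<le> real (nat \<lfloor>t / h\<rfloor>)" by (simp add: j_def)
    ultimately show ?thesis using hpos by (meson mult_right_mono order_trans less_imp_le)
  qed
  have jge: "t \<le> (real j + 1) * h"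
  proof (cases "j = K - 1")
    case True
    then have "real j + 1 = real K" using K by (simp add: of_nat_diff)
    then show ?thesis using t sK by simp
  next
    case False
    then have "j = nat \<lfloor>t / h\<rfloor>" by (simp add: j_def min_def split: if_splits)
    then have "t / h < real j + 1" using t hpos by linarith
    then show ?thesis using hpos by (simp add: divide_less_eq less_imp_le)
  qed
  have trm: "pos_part (t - s * real k / real K) + pos_part (- t - s * real k / real K)
      = (if k \<le> j then t - real k * h else 0)" if "k \<in> {1..K}" for k
  proof -
    have e: "s * real k / real K = real k * h" by (simp add: h_def)
    have "0 \<le> real k * h" using hpos by simp
    then have "pos_part (- t - real k * h) = 0" using t by (simp add: pos_part_def)
    moreover have "pos_part (t - real k * h) = (if k \<le> j then t - real k * h else 0)"
    proof (cases "k \<le> j")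
      case True
      then have "real k * h \<le> real j * h" using hpos by (simp add: mult_right_mono)
      then show ?thesis using True jle by (simp add: pos_part_def)
    next
      case False
      then have "real j + 1 \<le> real k" by simp
      then have "(real j + 1) * h \<le> real k * h" using hpos by (simp add: mult_right_mono)
      then show ?thesis using False jge by (simp add: pos_part_def)
    qed
    ultimately show ?thesis using e by simp
  qed
  have "(\<Sum>k=1..K. pos_part (t - s * real k / real K) + pos_part (- t - s * real k / real K))
      = (\<Sum>k=1..K. (if k \<le> j then t - real k * h else 0))"
    using trm by (rule sum.cong[OF refl])
  also have "\<dots> = (\<Sum>k=1..j. (if k \<le> j then t - real k * h else 0))"
    using jK by (intro sum.mono_neutral_right) auto
  also have "\<dots> = (\<Sum>k=1..j. t - real k * h)" by simp
  finally have S: "f_square s K t = 2 * h * (real j * t - h * real j * (real j + 1) / 2)"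
    unfolding f_square_def gsum h_def by simp
  have eq: "t ^ 2 - f_square s K t = (t - real j * h) ^ 2 + h ^ 2 * real j"
    unfolding S by (simp add: algebra_simps power2_eq_square)
  have a: "(t - real j * h) ^ 2 \<le> h ^ 2"
    using jle jge hpos by (intro power_mono) (auto simp: algebra_simps)
  have b: "h ^ 2 * real j \<le> h ^ 2 * (real K - 1)"
    using jK K hpos by (intro mult_left_mono) (auto simp: of_nat_diff)
  have "\<bar>f_square s K t - t ^ 2\<bar> = (t - real j * h) ^ 2 + h ^ 2 * real j"
    using eq by (smt (verit) zero_le_power2 hpos mult_nonneg_nonneg of_nat_0_le_iff zero_le_power2)
  also have "\<dots> \<le> h ^ 2 * real K" using a b by (simp add: algebra_simps)
  also have "\<dots> \<le> s ^ 2 * (1 / real K + 1 / (real K) ^ 2)"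
  proof -
    have "h ^ 2 * real K = s ^ 2 / real K" using K by (simp add: h_def power2_eq_square)
    moreover have "s ^ 2 / real K \<le> s ^ 2 * (1 / real K + 1 / (real K) ^ 2)"
      by (simp add: algebra_simps)
    ultimately show ?thesis by simp
  qed
  finally show ?thesis .
qed

theorem lemma12:
  fixes s :: real and K :: nat
  assumes "s > 0" and "K \<ge> 1"
  shows "(SUP t\<in>{-s..s}. \<bar>f_square s K t - t ^ 2\<bar>) \<le> s ^ 2 * (1 / real K + 1 / (real K) ^ 2)"
proof (rule cSUP_least)
  show "{-s..s} \<noteq> {}" using assms by simp
next
  fix t assume t: "t \<in> {-s..s}"
  show "\<bar>f_square s K t - t ^ 2\<bar> \<le> s ^ 2 * (1 / real K + 1 / (real K) ^ 2)"
  proof (cases "t \<ge> 0")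
    case True then show ?thesis using pos_case[OF assms] t by simp
  next
    case False
    then have "\<bar>f_square s K (-t) - (-t) ^ 2\<bar> \<le> s ^ 2 * (1 / real K + 1 / (real K) ^ 2)"
      using pos_case[OF assms, of "-t"] t by simp
    then show ?thesis by (simp add: even_f)
  qed
qed

end
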